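(* Define, for natural numbers $n,h$, $M(n,h)=\frac{2n+2-2\lceil 2\sqrt{n+h}\,\rceil}{4}$. If $M(n,h)<h$, then there is no polyomino with $n$ tiles and $h$ holes. Moreover, for every $h\ge1$, $h\le M(g(h),h)$.
   Context: A polyomino is a finite union of closed unit squares (tiles) of the square lattice, any two meeting (if at all) in a whole edge, whose interior is connected. Its holes are the bounded connected components of its complement in the plane. For $h\ge1$, $g(h)$ is the minimum number of tiles of a polyomino with exactly $h$ holes. *)

theory Defs
  imports "HOL-Analysis.Analysis"
begin

definition tile :: "int \<times> int \<Rightarrow> (real \<times> real) set" where
  "tile c = {x. real_of_int (fst c) \<le> fst x \<and> fst x \<le> real_of_int (fst c) + 1 \<and>
               real_of_int (snd c) \<le> snd x \<and> snd x \<le> real_of_int (snd c) + 1}"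

definition region :: "(int \<times> int) set \<Rightarrow> (real \<times> real) set" where
  "region P = (\<Union>c\<in>P. tile c)"

definition is_polyomino :: "(int \<times> int) set \<Rightarrow> bool" where
  "is_polyomino P \<longleftrightarrow> finite P \<and> P \<noteq> {} \<and> connected (interior (region P))"

definition holes :: "(int \<times> int) set \<Rightarrow> (real \<times> real) set set" where
  "holes P = {C \<in> components (- region P). bounded C}"

definition num_holes :: "(int \<times> int) set \<Rightarrow> nat" where
  "num_holes P = card (holes P)"

definition g :: "nat \<Rightarrow> nat" where
  "g h = (LEAST n. \<exists>P. is_polyomino P \<and> card P = n \<and> num_holes P = h)"

definition M :: "nat \<Rightarrow> nat \<Rightarrow> real" where
  "M n h = (2 * real n + 2 - 2 * real_of_int \<lceil>2 * sqrt (real (n + h))\<rceil>) / 4"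

end

theory Submission
  imports Defs
begin


definition oint :: "int \<times> int \<Rightarrow> (real \<times> real) set" where
  "oint c = {real_of_int (fst c) <..< real_of_int (fst c) + 1} \<times> {real_of_int (snd c) <..< real_of_int (snd c) + 1}"

definition cen :: "int \<times> int \<Rightarrow> real \<times> real" where
  "cen c = (real_of_int (fst c) + 1/2, real_of_int (snd c) + 1/2)"

definition adj :: "int \<times> int \<Rightarrow> int \<times> int \<Rightarrow> bool" where
  "adj a b \<longleftrightarrow> (b = (fst a + 1, snd a) \<or> b = (fst a - 1, snd a) \<or> b = (fst a, snd a + 1) \<or> b = (fst a, snd a - 1))"

lemma tile_Times: "tile c = {real_of_int (fst c) .. real_of_int (fst c) + 1} \<times> {real_of_int (snd c) .. real_of_int (snd c) + 1}"
  by (auto simp: tile_def)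

lemma closure_oint: "closure (oint c) = tile c"
  by (simp add: oint_def tile_Times closure_Times)

lemma open_oint: "open (oint c)"
  by (simp add: oint_def open_Times)

lemma convex_oint: "convex (oint c)"
  by (simp add: oint_def convex_Times)

lemma cen_oint: "cen c \<in> oint c"
  by (simp add: oint_def cen_def)

lemma oint_sub_tile: "oint c \<subseteq> tile c"
  by (auto simp: oint_def tile_Times)

lemma int_le1: "real_of_int a \<le> x \<Longrightarrow> x < real_of_int b + 1 \<Longrightarrow> a \<le> b"
proof -
  assume "real_of_int a \<le> x" "x < real_of_int b + 1"
  then have "real_of_int a < real_of_int (b + 1)" by simp
  then have "a < b + 1" by (simp only: of_int_less_iff)
  then show "a \<le> b" by simp
qed

lemma int_le2: "real_of_int a < x \<Longrightarrow> x \<le> real_of_int b + 1 \<Longrightarrow> a \<le> b"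
proof -
  assume "real_of_int a < x" "x \<le> real_of_int b + 1"
  then have "real_of_int a < real_of_int (b + 1)" by simp
  then have "a < b + 1" by (simp only: of_int_less_iff)
  then show "a \<le> b" by simp
qed

lemma int_le3: "real_of_int a \<le> x \<Longrightarrow> x \<le> real_of_int b + 1 \<Longrightarrow> a \<le> b + 1"
proof -
  assume "real_of_int a \<le> x" "x \<le> real_of_int b + 1"
  then have "real_of_int a \<le> real_of_int (b + 1)" by simp
  then show "a \<le> b + 1" by (simp only: of_int_le_iff)
qed

lemma oint_tile: "x \<in> oint c \<Longrightarrow> x \<in> tile d \<Longrightarrow> d = c"
proof -
  assume a: "x \<in> oint c" "x \<in> tile d"
  have "fst d \<le> fst c" using a by (auto simp: oint_def tile_def intro: int_le1)
  moreover have "fst c \<le> fst d" using a by (auto simp: oint_def tile_def intro: int_le2)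
  moreover have "snd d \<le> snd c" using a by (auto simp: oint_def tile_def intro: int_le1)
  moreover have "snd c \<le> snd d" using a by (auto simp: oint_def tile_def intro: int_le2)
  ultimately show "d = c" by (simp add: prod_eq_iff)
qed

lemma region_iff: "x \<in> region P \<longleftrightarrow> (\<exists>c\<in>P. x \<in> tile c)"
  by (simp add: region_def)

lemma oint_region: "c \<notin> P \<Longrightarrow> x \<in> oint c \<Longrightarrow> x \<notin> region P"
  using oint_tile by (fastforce simp: region_iff)

lemma tile_region: "c \<in> P \<Longrightarrow> tile c \<subseteq> region P"
  by (auto simp: region_iff)

lemma closed_tile: "closed (tile c)"
  by (simp add: tile_Times closed_Times)

lemma compact_tile: "compact (tile c)"
  by (simp add: tile_Times compact_Times)

lemma closed_region: "finite P \<Longrightarrow> closed (region P)"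
  unfolding region_def using closed_tile by (intro closed_UN) auto

lemma bounded_region: "finite P \<Longrightarrow> bounded (region P)"
  unfolding region_def using compact_tile compact_imp_bounded by (intro bounded_UN) auto

lemma floor_tile: "x \<in> tile (\<lfloor>fst x\<rfloor>, \<lfloor>snd x\<rfloor>)"
  by (simp add: tile_def)

lemma oint_interior: "c \<in> P \<Longrightarrow> oint c \<subseteq> interior (region P)"
  by (meson interior_maximal oint_sub_tile open_oint order_trans tile_region)

lemma adj_sym: "adj a b \<Longrightarrow> adj b a"
  by (cases a; cases b) (auto simp: adj_def)

lemma adj_irrefl: "\<not> adj a a"
  by (cases a) (auto simp: adj_def)

definition linkset :: "bool \<Rightarrow> int \<times> int \<Rightarrow> (real \<times> real) set" where
  "linkset hz a = (if hz then {real_of_int (fst a) <..< real_of_int (fst a) + 2} \<times> {real_of_int (snd a) <..< real_of_int (snd a) + 1}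
     else {real_of_int (fst a) <..< real_of_int (fst a) + 1} \<times> {real_of_int (snd a) <..< real_of_int (snd a) + 2})"

definition nxt :: "bool \<Rightarrow> int \<times> int \<Rightarrow> int \<times> int" where
  "nxt hz a = (if hz then (fst a + 1, snd a) else (fst a, snd a + 1))"

lemma link_basic:
  fixes hz :: bool and a :: "int \<times> int"
  defines "b \<equiv> nxt hz a" and "T \<equiv> linkset hz a"
  shows "connected T \<and> open T \<and> cen a \<in> T \<and> cen b \<in> T \<and> T \<subseteq> tile a \<union> tile b \<and>
             (\<forall>x\<in>T. \<forall>d. x \<in> tile d \<longrightarrow> d = a \<or> d = b)"
proof (intro conjI ballI allI impI)
  show "connected T" unfolding T_def linkset_def
    by (intro convex_connected) (simp add: convex_Times)
  show "open T" unfolding T_def linkset_def by (simp add: open_Times)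
  show "cen a \<in> T" "cen b \<in> T" unfolding T_def linkset_def b_def nxt_def cen_def by auto
  show "T \<subseteq> tile a \<union> tile b" unfolding T_def linkset_def b_def nxt_def tile_def
    by (cases hz) (auto simp: subset_iff)
  fix x d assume x: "x \<in> T" "x \<in> tile d"
  show "d = a \<or> d = b"
  proof (cases hz)
    case True
    obtain x1 x2 where xx: "x = (x1, x2)" by (cases x)
    have h: "real_of_int (fst a) < x1" "x1 < real_of_int (fst a + 1) + 1" "real_of_int (snd a) < x2" "x2 < real_of_int (snd a) + 1"
      "real_of_int (fst d) \<le> x1" "x1 \<le> real_of_int (fst d) + 1" "real_of_int (snd d) \<le> x2" "x2 \<le> real_of_int (snd d) + 1"
      using x True unfolding T_def linkset_def tile_def xx by auto
    have "snd d \<le> snd a" "snd a \<le> snd d" "fst d \<le> fst a + 1" "fst a \<le> fst d"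
      using int_le1[OF h(7) h(4)] int_le2[OF h(3) h(8)] int_le1[OF h(5) h(2)] int_le2[OF h(1) h(6)] .
    then show ?thesis using True unfolding b_def nxt_def by (auto simp: prod_eq_iff)
  next
    case False
    obtain x1 x2 where xx: "x = (x1, x2)" by (cases x)
    have h: "real_of_int (snd a) < x2" "x2 < real_of_int (snd a + 1) + 1" "real_of_int (fst a) < x1" "x1 < real_of_int (fst a) + 1"
      "real_of_int (snd d) \<le> x2" "x2 \<le> real_of_int (snd d) + 1" "real_of_int (fst d) \<le> x1" "x1 \<le> real_of_int (fst d) + 1"
      using x False unfolding T_def linkset_def tile_def xx by auto
    have "fst d \<le> fst a" "fst a \<le> fst d" "snd d \<le> snd a + 1" "snd a \<le> snd d"
      using int_le1[OF h(7) h(4)] int_le2[OF h(3) h(8)] int_le1[OF h(5) h(2)] int_le2[OF h(1) h(6)] .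
    then show ?thesis using False unfolding b_def nxt_def by (auto simp: prod_eq_iff)
  qed
qed

lemma adj_nxt: "adj a b \<Longrightarrow> (\<exists>hz. b = nxt hz a \<or> a = nxt hz b)"
proof -
  assume "adj a b"
  then consider "b = (fst a + 1, snd a)" | "b = (fst a - 1, snd a)" | "b = (fst a, snd a + 1)" | "b = (fst a, snd a - 1)"
    unfolding adj_def by blast
  then show ?thesis
  proof cases
    case 1 then have "b = nxt True a" by (simp add: nxt_def)
    then show ?thesis by blast
  next
    case 2 then have "a = nxt True b" by (simp add: nxt_def)
    then show ?thesis by blast
  next
    case 3 then have "b = nxt False a" by (simp add: nxt_def)
    then show ?thesis by blast
  next
    case 4 then have "a = nxt False b" by (simp add: nxt_def)
    then show ?thesis by blast
  qed
qed

lemma link: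
  assumes "adj a b"
  shows "\<exists>T. connected T \<and> open T \<and> cen a \<in> T \<and> cen b \<in> T \<and> T \<subseteq> tile a \<union> tile b \<and>
             (\<forall>x\<in>T. \<forall>d. x \<in> tile d \<longrightarrow> d = a \<or> d = b)"
proof -
  obtain hz where "b = nxt hz a \<or> a = nxt hz b" using adj_nxt[OF assms] by blast
  then show ?thesis
  proof
    assume "b = nxt hz a" then show ?thesis using link_basic[of hz a] by blast
  next
    assume "a = nxt hz b" then show ?thesis using link_basic[of hz b] by blast
  qed
qed


definition EP :: "(int \<times> int) set \<Rightarrow> ((int \<times> int) \<times> (int \<times> int)) set" where
  "EP P = {(a,b). a \<in> P \<and> b \<in> P \<and> adj a b}"

definition bd :: "(int \<times> int) set \<Rightarrow> ((int \<times> int) \<times> (int \<times> int)) set" where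
  "bd X = {(a,b). a \<in> X \<and> b \<notin> X \<and> adj a b}"

lemma region_Un: "region (A \<union> B) = region A \<union> region B"
  by (auto simp: region_def)

lemma corner:
  assumes "a \<noteq> b" "\<not> adj a b" "x \<in> tile a" "x \<in> tile b"
  shows "adj a (fst a, snd b) \<and> adj b (fst a, snd b) \<and> x \<in> tile (fst a, snd b)"
proof -
  obtain a1 a2 b1 b2 where ab: "a = (a1,a2)" "b = (b1,b2)" by (cases a; cases b)
  obtain x1 x2 where xx: "x = (x1,x2)" by (cases x)
  have h: "real_of_int a1 \<le> x1" "x1 \<le> real_of_int a1 + 1" "real_of_int a2 \<le> x2" "x2 \<le> real_of_int a2 + 1"
    "real_of_int b1 \<le> x1" "x1 \<le> real_of_int b1 + 1" "real_of_int b2 \<le> x2" "x2 \<le> real_of_int b2 + 1"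
    using assms(3,4) unfolding ab xx tile_def by auto
  have i: "a1 \<le> b1 + 1" "b1 \<le> a1 + 1" "a2 \<le> b2 + 1" "b2 \<le> a2 + 1"
    using int_le3[OF h(1) h(6)] int_le3[OF h(5) h(2)] int_le3[OF h(3) h(8)] int_le3[OF h(7) h(4)] .
  have n: "\<not> (b1 = a1 + 1 \<and> b2 = a2)" "\<not> (b1 = a1 - 1 \<and> b2 = a2)" "\<not> (b1 = a1 \<and> b2 = a2 + 1)" "\<not> (b1 = a1 \<and> b2 = a2 - 1)"
    "\<not> (b1 = a1 \<and> b2 = a2)"
    using assms(1,2) unfolding ab adj_def by auto
  have "b1 = a1 + 1 \<or> b1 = a1 - 1" "b2 = a2 + 1 \<or> b2 = a2 - 1" using i n by arith+
  then have "adj a (fst a, snd b)" "adj b (fst a, snd b)" unfolding ab adj_def by auto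
  moreover have "x \<in> tile (fst a, snd b)" using h unfolding ab xx tile_def by simp
  ultimately show ?thesis by blast
qed

lemma not_interior_tile:
  assumes "d \<notin> P" "x \<in> tile d"
  shows "x \<notin> interior (region P)"
proof
  assume x: "x \<in> interior (region P)"
  have "interior (region P) \<inter> oint d = {}"
    using oint_region[OF assms(1)] interior_subset by blast
  then have "interior (region P) \<inter> closure (oint d) = {}"
    using open_Int_closure_eq_empty[of "interior (region P)" "oint d"] by simp
  then show False using x assms(2) closure_oint by blast
qed

lemma split_false:
  assumes poly: "is_polyomino P" and P: "P = A \<union> B" and dis: "A \<inter> B = {}" and ne: "A \<noteq> {}" "B \<noteq> {}"
    and na: "\<forall>a\<in>A. \<forall>b\<in>B. \<not> adj a b"
  shows False
proof -
  define U where "U = interior (region P)"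
  have fin: "finite A" "finite B" using poly P unfolding is_polyomino_def by auto
  have conn: "connected U" using poly unfolding is_polyomino_def U_def by simp
  have o1: "open (- region B)" "open (- region A)" using closed_region[OF fin(2)] closed_region[OF fin(1)]
    by (auto simp: open_Compl)
  have c1: "(- region B) \<inter> (- region A) \<inter> U = {}"
    using interior_subset[of "region P"] unfolding U_def P region_Un by blast
  have c2: "U \<subseteq> (- region B) \<union> (- region A)"
  proof
    fix x assume xU: "x \<in> U"
    show "x \<in> (- region B) \<union> (- region A)"
    proof (rule ccontr)
      assume "x \<notin> (- region B) \<union> (- region A)"
      then obtain a b where ab: "a \<in> A" "b \<in> B" "x \<in> tile a" "x \<in> tile b" by (auto simp: region_iff)
      have "a \<noteq> b" using ab dis by blast
      moreover have "\<not> adj a b" using na ab by blast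
      ultimately have cc: "adj a (fst a, snd b) \<and> adj b (fst a, snd b) \<and> x \<in> tile (fst a, snd b)"
        using corner ab by blast
      have "(fst a, snd b) \<notin> P"
      proof
        assume "(fst a, snd b) \<in> P"
        then have "(fst a, snd b) \<in> A \<or> (fst a, snd b) \<in> B" using P by blast
        then show False using na ab cc adj_sym by blast
      qed
      then show False using not_interior_tile cc xU U_def by blast
    qed
  qed
  obtain a where a: "a \<in> A" using ne by blast
  obtain b where b: "b \<in> B" using ne by blast
  have "a \<notin> B" "b \<notin> A" using a b dis by auto
  have "cen a \<in> U" "cen b \<in> U" using oint_interior cen_oint a b P unfolding U_def by blast+
  moreover have "cen a \<notin> region B" "cen b \<notin> region A"
    using oint_region cen_oint \<open>a \<notin> B\<close> \<open>b \<notin> A\<close> by blast+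
  ultimately have "(- region B) \<inter> U \<noteq> {}" "(- region A) \<inter> U \<noteq> {}" by blast+
  then show False using connectedD[OF conn o1 c1 c2] by blast
qed

lemma poly_conn:
  assumes poly: "is_polyomino P" and r: "r \<in> P" and b: "b \<in> P"
  shows "(r, b) \<in> (EP P)\<^sup>*"
proof (rule ccontr)
  assume nb: "(r, b) \<notin> (EP P)\<^sup>*"
  define A where "A = {c \<in> P. (r, c) \<in> (EP P)\<^sup>*}"
  have "P = A \<union> (P - A)" "A \<inter> (P - A) = {}" using A_def by auto
  moreover have "A \<noteq> {}" using r unfolding A_def by blast
  moreover have "P - A \<noteq> {}" using b nb A_def by auto
  moreover have "\<forall>a\<in>A. \<forall>c\<in>P - A. \<not> adj a c"
  proof (intro ballI notI)
    fix a c assume "a \<in> A" "c \<in> P - A" "adj a c"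
    then have "(r, a) \<in> (EP P)\<^sup>*" "(a, c) \<in> EP P" unfolding A_def EP_def by auto
    then have "(r, c) \<in> (EP P)\<^sup>*" by (rule rtrancl_into_rtrancl)
    then show False using \<open>c \<in> P - A\<close> A_def by auto
  qed
  ultimately show False using split_false[OF poly] by blast
qed


definition nbrs :: "int \<times> int \<Rightarrow> (int \<times> int) set" where
  "nbrs a = {(fst a + 1, snd a), (fst a - 1, snd a), (fst a, snd a + 1), (fst a, snd a - 1)}"

lemma adj_nbrs: "adj a b \<longleftrightarrow> b \<in> nbrs a"
  by (simp add: adj_def nbrs_def)

lemma card_nbrs: "card (nbrs a) = 4"
  by (simp add: nbrs_def)

lemma card_adjpairs:
  assumes "finite P"
  shows "card {(a,b). a \<in> P \<and> adj a b} = 4 * card P"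
proof -
  have "{(a,b). a \<in> P \<and> adj a b} = Sigma P nbrs" by (auto simp: adj_nbrs)
  moreover have "card (Sigma P nbrs) = 4 * card P"
    using assms by (simp add: card_nbrs nbrs_def)
  ultimately show ?thesis by simp
qed

lemma finite_nbrs: "finite (nbrs a)" by (simp add: nbrs_def)

lemma EP_bd_split:
  assumes "finite P"
  shows "card (EP P) + card (bd P) = 4 * card P"
proof -
  have "{(a,b). a \<in> P \<and> adj a b} = EP P \<union> bd P" "EP P \<inter> bd P = {}"
    by (auto simp: EP_def bd_def)
  moreover have "finite {(a,b). a \<in> P \<and> adj a b}"
  proof -
    have "{(a,b). a \<in> P \<and> adj a b} = Sigma P nbrs" by (auto simp: adj_nbrs)
    then show ?thesis using assms finite_nbrs by simp
  qed
  ultimately show ?thesis using card_adjpairs[OF assms] card_Un_disjoint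
    by (metis finite_Un)
qed

lemma EP_lower:
  assumes fin: "finite P" and r: "r \<in> P" and conn: "\<And>b. b \<in> P \<Longrightarrow> (r, b) \<in> (EP P)\<^sup>*"
  shows "2 * (card P - 1) \<le> card (EP P)"
proof -
  define E where "E = EP P"
  define dist where "dist v = (LEAST k. (r, v) \<in> E ^^ k)" for v
  have par_ex: "\<exists>u. (u, v) \<in> E \<and> dist u < dist v" if v: "v \<in> P" "v \<noteq> r" for v
  proof -
    have "\<exists>k. (r, v) \<in> E ^^ k" using conn[OF v(1)] rtrancl_power unfolding E_def by blast
    then have dv: "(r, v) \<in> E ^^ dist v" unfolding dist_def by (rule LeastI_ex)
    have "dist v \<noteq> 0"
    proof
      assume "dist v = 0"
      then have "(r, v) \<in> E ^^ 0" using dv by simp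
      then show False using v(2) by simp
    qed
    then obtain k where k: "dist v = Suc k" using not0_implies_Suc by blast
    then obtain u where u: "(r, u) \<in> E ^^ k" "(u, v) \<in> E" using dv relpow_Suc_E by metis
    have "dist u \<le> k" unfolding dist_def using u(1) by (rule Least_le)
    then have "dist u < dist v" using k by simp
    then show ?thesis using u(2) by blast
  qed
  define par where "par v = (SOME u. (u, v) \<in> E \<and> dist u < dist v)" for v
  have par: "(par v, v) \<in> E \<and> dist (par v) < dist v" if "v \<in> P" "v \<noteq> r" for v
    unfolding par_def using someI_ex[OF par_ex[OF that]] .
  have Esym: "(a, b) \<in> E \<Longrightarrow> (b, a) \<in> E" for a b unfolding E_def EP_def using adj_sym by auto
  define f where "f = (\<lambda>(v, t::bool). if t then (par v, v) else (v, par v))"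
  have inj: "inj_on f ((P - {r}) \<times> UNIV)"
  proof (rule inj_onI)
    fix x y assume x: "x \<in> (P - {r}) \<times> UNIV" and y: "y \<in> (P - {r}) \<times> UNIV" and e: "f x = f y"
    obtain v t where xv: "x = (v, t)" by (cases x)
    obtain w u where yw: "y = (w, u)" by (cases y)
    have pv: "dist (par v) < dist v" and pw: "dist (par w) < dist w"
      using par x y xv yw by auto
    show "x = y"
      using e pv pw unfolding xv yw f_def by (cases t; cases u) auto
  qed
  have img: "f ` ((P - {r}) \<times> UNIV) \<subseteq> E"
  proof
    fix z assume "z \<in> f ` ((P - {r}) \<times> UNIV)"
    then obtain v t where vt: "v \<in> P - {r}" "z = f (v, t)" by auto
    have "(par v, v) \<in> E" using par vt(1) by blast
    then show "z \<in> E" using vt(2) Esym unfolding f_def by (cases t) auto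
  qed
  have finE: "finite E"
  proof -
    have "E \<subseteq> P \<times> P" unfolding E_def EP_def by auto
    then show ?thesis using fin finite_subset by blast
  qed
  have c1: "card ((P - {r}) \<times> (UNIV :: bool set)) = (card P - 1) * 2"
    using fin r by (simp add: card_cartesian_product)
  have "2 * (card P - 1) = card (f ` ((P - {r}) \<times> UNIV))" using card_image[OF inj] c1 by simp
  also have "\<dots> \<le> card E" using card_mono[OF finE img] .
  finally show ?thesis unfolding E_def by simp
qed

lemma bd_upper:
  assumes poly: "is_polyomino P"
  shows "card (bd P) \<le> 2 * card P + 2"
proof -
  have fin: "finite P" and ne: "P \<noteq> {}" using poly unfolding is_polyomino_def by auto
  obtain r where r: "r \<in> P" using ne by blast
  have "2 * (card P - 1) \<le> card (EP P)" using EP_lower[OF fin r poly_conn[OF poly r]] by blast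
  moreover have "card P \<ge> 1" using fin ne by (simp add: Suc_le_eq card_gt_0_iff)
  ultimately show ?thesis using EP_bd_split[OF fin] by linarith
qed



lemma iso_count:
  assumes fin: "finite X" and ne: "X \<noteq> {}"
  shows "2 * card (fst ` X) + 2 * card (snd ` X) \<le> card (bd X)"
proof -
  define mx where "mx z = Max {y. (z, y) \<in> X}" for z
  define mn where "mn z = Min {y. (z, y) \<in> X}" for z
  define rx where "rx z = Max {x. (x, z) \<in> X}" for z
  define lx where "lx z = Min {x. (x, z) \<in> X}" for z
  have fc: "finite {y. (z, y) \<in> X}" for z
  proof -
    have "{y. (z, y) \<in> X} \<subseteq> snd ` X" by force
    then show ?thesis using fin finite_subset by blast
  qed
  have fr: "finite {x. (x, z) \<in> X}" for z
  proof -
    have "{x. (x, z) \<in> X} \<subseteq> fst ` X" by force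
    then show ?thesis using fin finite_subset by blast
  qed
  have nc: "{y. (z, y) \<in> X} \<noteq> {}" if "z \<in> fst ` X" for z using that by force
  have nr: "{x. (x, z) \<in> X} \<noteq> {}" if "z \<in> snd ` X" for z using that by force
  have mx1: "(z, mx z) \<in> X" "(z, mx z + 1) \<notin> X" if "z \<in> fst ` X" for z
  proof -
    show "(z, mx z) \<in> X" using Max_in[OF fc nc[OF that]] unfolding mx_def by simp
    show "(z, mx z + 1) \<notin> X"
    proof
      assume "(z, mx z + 1) \<in> X"
      then have "mx z + 1 \<le> mx z" unfolding mx_def by (intro Max_ge[OF fc]) simp
      then show False by simp
    qed
  qed
  have mn1: "(z, mn z) \<in> X" "(z, mn z - 1) \<notin> X" if "z \<in> fst ` X" for z
  proof -
    show "(z, mn z) \<in> X" using Min_in[OF fc nc[OF that]] unfolding mn_def by simp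
    show "(z, mn z - 1) \<notin> X"
    proof
      assume "(z, mn z - 1) \<in> X"
      then have "mn z \<le> mn z - 1" unfolding mn_def by (intro Min_le[OF fc]) simp
      then show False by simp
    qed
  qed
  have rx1: "(rx z, z) \<in> X" "(rx z + 1, z) \<notin> X" if "z \<in> snd ` X" for z
  proof -
    show "(rx z, z) \<in> X" using Max_in[OF fr nr[OF that]] unfolding rx_def by simp
    show "(rx z + 1, z) \<notin> X"
    proof
      assume "(rx z + 1, z) \<in> X"
      then have "rx z + 1 \<le> rx z" unfolding rx_def by (intro Max_ge[OF fr]) simp
      then show False by simp
    qed
  qed
  have lx1: "(lx z, z) \<in> X" "(lx z - 1, z) \<notin> X" if "z \<in> snd ` X" for z
  proof -
    show "(lx z, z) \<in> X" using Min_in[OF fr nr[OF that]] unfolding lx_def by simp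
    show "(lx z - 1, z) \<notin> X"
    proof
      assume "(lx z - 1, z) \<in> X"
      then have "lx z \<le> lx z - 1" unfolding lx_def by (intro Min_le[OF fr]) simp
      then show False by simp
    qed
  qed
  define gf where "gf = (\<lambda>(z, k::nat). if k = 0 then ((z, mx z), (z, mx z + 1))
     else if k = 1 then ((z, mn z), (z, mn z - 1))
     else if k = 2 then ((rx z, z), (rx z + 1, z))
     else ((lx z, z), (lx z - 1, z)))"
  define D where "D = (fst ` X \<times> {0::nat, 1}) \<union> (snd ` X \<times> {2, 3})"
  have finD: "finite D" unfolding D_def using fin by simp
  have cardD: "card D = 2 * card (fst ` X) + 2 * card (snd ` X)"
  proof -
    have "card D = card (fst ` X \<times> {0::nat, 1}) + card (snd ` X \<times> {2::nat, 3})"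
      unfolding D_def by (rule card_Un_disjoint) (use fin in auto)
    then show ?thesis by (simp add: card_cartesian_product)
  qed
  have inj: "inj_on gf D"
  proof (rule inj_onI)
    fix p q assume p: "p \<in> D" and q: "q \<in> D" and e: "gf p = gf q"
    obtain z k where pz: "p = (z, k)" by (cases p)
    obtain w l where qw: "q = (w, l)" by (cases q)
    have k: "k \<in> {0,1,2,3}" "l \<in> {0,1,2,3}" using p q pz qw unfolding D_def by auto
    show "p = q" using e k unfolding pz qw gf_def by (auto simp: split: if_splits)
  qed
  have img: "gf ` D \<subseteq> bd X"
  proof
    fix t assume "t \<in> gf ` D"
    then obtain z k where zk: "(z, k) \<in> D" "t = gf (z, k)" by auto
    then consider "z \<in> fst ` X" "k = 0" | "z \<in> fst ` X" "k = 1" | "z \<in> snd ` X" "k = 2" | "z \<in> snd ` X" "k = 3"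
      unfolding D_def by auto
    then show "t \<in> bd X"
    proof cases
      case 1 then show ?thesis using zk mx1 unfolding gf_def bd_def adj_def by simp
    next
      case 2 then show ?thesis using zk mn1 unfolding gf_def bd_def adj_def by simp
    next
      case 3 then show ?thesis using zk rx1 unfolding gf_def bd_def adj_def by simp
    next
      case 4 then show ?thesis using zk lx1 unfolding gf_def bd_def adj_def by simp
    qed
  qed
  have finbd: "finite (bd X)"
  proof -
    have "bd X \<subseteq> Sigma X nbrs" unfolding bd_def by (auto simp: adj_nbrs)
    moreover have "finite (Sigma X nbrs)" using fin finite_nbrs by simp
    ultimately show ?thesis using finite_subset by blast
  qed
  have "card D = card (gf ` D)" using card_image[OF inj] by simp
  also have "\<dots> \<le> card (bd X)" using card_mono[OF finbd img] .
  finally show ?thesis using cardD by simp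
qed

lemma iso_real:
  fixes W H m :: nat
  assumes "m \<le> W * H"
  shows "\<lceil>2 * sqrt (real m)\<rceil> \<le> int W + int H"
proof -
  have "0 \<le> (real W - real H)^2" by simp
  then have "4 * (real W * real H) \<le> (real W + real H)^2" by (simp add: power2_eq_square algebra_simps)
  moreover have "real m \<le> real W * real H" using assms by (metis of_nat_le_iff of_nat_mult)
  ultimately have "4 * real m \<le> (real W + real H)^2" by linarith
  then have "sqrt (4 * real m) \<le> sqrt ((real W + real H)^2)" by (rule real_sqrt_le_mono)
  moreover have "sqrt (4 * real m) = 2 * sqrt (real m)" by (simp add: real_sqrt_mult)
  moreover have "sqrt ((real W + real H)^2) = real W + real H" by simp
  ultimately have "2 * sqrt (real m) \<le> real_of_int (int W + int H)" by simp
  then show ?thesis by (simp add: ceiling_le_iff)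
qed

lemma iso_final:
  assumes fin: "finite X" and ne: "X \<noteq> {}" and m: "m \<le> card X"
  shows "2 * \<lceil>2 * sqrt (real m)\<rceil> \<le> int (card (bd X))"
proof -
  have "X \<subseteq> fst ` X \<times> snd ` X" by force
  then have "card X \<le> card (fst ` X \<times> snd ` X)" using fin by (intro card_mono) auto
  then have "m \<le> card (fst ` X) * card (snd ` X)" using m by (simp add: card_cartesian_product)
  then have "\<lceil>2 * sqrt (real m)\<rceil> \<le> int (card (fst ` X)) + int (card (snd ` X))" by (rule iso_real)
  then show ?thesis using iso_count[OF fin ne] by linarith
qed



definition comp :: "(int \<times> int) set \<Rightarrow> real \<times> real \<Rightarrow> (real \<times> real) set" where
  "comp P x = connected_component_set (- region P) x"

definition FF :: "(int \<times> int) set \<Rightarrow> (int \<times> int) set" where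
  "FF P = {c. bounded (comp P (cen c))}"

definition Kc :: "(real \<times> real) set \<Rightarrow> (int \<times> int) set" where
  "Kc C = {c. cen c \<in> C}"

lemma cen_in_tile: "cen c \<in> tile c"
  using cen_oint oint_sub_tile by blast

lemma H1:
  assumes "x \<notin> region P"
  shows "cen (\<lfloor>fst x\<rfloor>, \<lfloor>snd x\<rfloor>) \<in> comp P x"
proof -
  define c where "c = (\<lfloor>fst x\<rfloor>, \<lfloor>snd x\<rfloor>)"
  have xt: "x \<in> tile c" unfolding c_def by (rule floor_tile)
  have cP: "c \<notin> P" using xt assms tile_region by blast
  define T where "T = insert x (oint c)"
  have "connected (oint c)" by (rule convex_connected[OF convex_oint])
  moreover have "oint c \<subseteq> T" unfolding T_def by blast
  moreover have "T \<subseteq> closure (oint c)" using xt closure_oint oint_sub_tile unfolding T_def by auto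
  ultimately have "connected T" by (rule connected_intermediate_closure)
  moreover have "T \<subseteq> - region P" unfolding T_def using assms oint_region[OF cP] by blast
  moreover have "x \<in> T" unfolding T_def by simp
  ultimately have "T \<subseteq> comp P x" unfolding comp_def by (intro connected_component_maximal)
  then show ?thesis unfolding c_def[symmetric] T_def using cen_oint by blast
qed

lemma H2:
  assumes "adj a b" "a \<notin> P" "b \<notin> P"
  shows "comp P (cen a) = comp P (cen b)"
proof -
  obtain T where T: "connected T" "cen a \<in> T" "cen b \<in> T" "\<forall>x\<in>T. \<forall>d. x \<in> tile d \<longrightarrow> d = a \<or> d = b"
    using link[OF assms(1)] by blast
  have "T \<subseteq> - region P"
  proof
    fix x assume "x \<in> T"
    show "x \<in> - region P"
    proof
      assume "x \<in> region P"
      then obtain d where "d \<in> P" "x \<in> tile d" by (auto simp: region_iff)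
      then show False using T(4) \<open>x \<in> T\<close> assms(2,3) by blast
    qed
  qed
  then have "T \<subseteq> comp P (cen a)" unfolding comp_def using T by (intro connected_component_maximal)
  then have "cen b \<in> comp P (cen a)" using T by blast
  then show ?thesis unfolding comp_def by (metis connected_component_eq)
qed

lemma H3:
  assumes fin: "finite P"
  shows "finite (FF P)"
proof -
  obtain R where R: "R > 0" "\<forall>x\<in>region P. norm x \<le> R"
    using bounded_region[OF fin] unfolding bounded_pos by blast
  define N where "N = \<lceil>R\<rceil> + 1"
  have sub: "FF P \<subseteq> {-N..N} \<times> {-N..N}"
  proof
    fix c assume c: "c \<in> FF P"
    have "norm (cen c) \<le> R"
    proof (rule ccontr)
      assume nr: "\<not> norm (cen c) \<le> R"
      have "connected (- cball (0::real \<times> real) R)"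
        by (rule connected_complement_bounded_convex) auto
      moreover have "- cball (0::real \<times> real) R \<subseteq> - region P" using R by auto
      moreover have "cen c \<in> - cball 0 R" using nr by auto
      ultimately have "- cball 0 R \<subseteq> comp P (cen c)" unfolding comp_def
        by (intro connected_component_maximal)
      moreover have "bounded (comp P (cen c))" using c unfolding FF_def by simp
      ultimately have "bounded (- cball (0::real \<times> real) R)" using bounded_subset by blast
      moreover have "bounded (cball (0::real \<times> real) R)" by simp
      ultimately have "bounded (cball 0 R \<union> - cball (0::real \<times> real) R)" by (simp only: bounded_Un)
      moreover have "cball 0 R \<union> - cball (0::real \<times> real) R = UNIV" by blast
      ultimately show False by (metis not_bounded_UNIV)
    qed
    then have h1: "norm (real_of_int (fst c) + 1/2) \<le> R" "norm (real_of_int (snd c) + 1/2) \<le> R"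
      unfolding cen_def using norm_fst_le norm_snd_le order_trans by metis+
    have "real_of_int (fst c) \<le> real_of_int \<lceil>R\<rceil>" "real_of_int (snd c) \<le> real_of_int \<lceil>R\<rceil>"
      "real_of_int (- \<lceil>R\<rceil> - 1) \<le> real_of_int (fst c)" "real_of_int (- \<lceil>R\<rceil> - 1) \<le> real_of_int (snd c)"
    proof -
      have ce: "R \<le> real_of_int \<lceil>R\<rceil>" by (rule le_of_int_ceiling)
      have a: "real_of_int (fst c) + 1/2 \<le> R" "- R \<le> real_of_int (fst c) + 1/2"
          "real_of_int (snd c) + 1/2 \<le> R" "- R \<le> real_of_int (snd c) + 1/2"
        using h1 by (simp_all add: abs_le_iff)
      show "real_of_int (fst c) \<le> real_of_int \<lceil>R\<rceil>" using a ce by linarith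
      show "real_of_int (snd c) \<le> real_of_int \<lceil>R\<rceil>" using a ce by linarith
      have "- real_of_int \<lceil>R\<rceil> - 1 \<le> real_of_int (fst c)" using a ce by linarith
      then show "real_of_int (- \<lceil>R\<rceil> - 1) \<le> real_of_int (fst c)" by simp
      have "- real_of_int \<lceil>R\<rceil> - 1 \<le> real_of_int (snd c)" using a ce by linarith
      then show "real_of_int (- \<lceil>R\<rceil> - 1) \<le> real_of_int (snd c)" by simp
    qed
    then have "fst c \<le> \<lceil>R\<rceil>" "snd c \<le> \<lceil>R\<rceil>" "- \<lceil>R\<rceil> - 1 \<le> fst c" "- \<lceil>R\<rceil> - 1 \<le> snd c"
      by (simp_all only: of_int_le_iff)
    then show "c \<in> {-N..N} \<times> {-N..N}" unfolding N_def by (cases c) auto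
  qed
  then show ?thesis using finite_subset by blast
qed

lemma H4: "P \<subseteq> FF P"
proof
  fix c assume "c \<in> P"
  then have "cen c \<in> region P" using cen_in_tile tile_region by blast
  then have "cen c \<notin> - region P" by simp
  then have "comp P (cen c) = {}" unfolding comp_def by (rule connected_component_eq_empty[THEN iffD2])
  then show "c \<in> FF P" unfolding FF_def by simp
qed

lemma hole_rep:
  assumes "C \<in> holes P"
  obtains x where "x \<notin> region P" "C = comp P x" "bounded C"
  using assms unfolding holes_def comp_def components_iff by blast

lemma H5:
  assumes C: "C \<in> holes P"
  shows "Kc C \<noteq> {}" "\<And>c. c \<in> Kc C \<Longrightarrow> comp P (cen c) = C" "Kc C \<subseteq> FF P" "Kc C \<inter> P = {}"
proof -
  obtain x where x: "x \<notin> region P" "C = comp P x" "bounded C" using hole_rep[OF C] by blast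
  show "Kc C \<noteq> {}" using H1[OF x(1)] x(2) unfolding Kc_def by blast
  show ce: "comp P (cen c) = C" if "c \<in> Kc C" for c
    using that x(2) unfolding Kc_def comp_def by (metis connected_component_eq mem_Collect_eq)
  show "Kc C \<subseteq> FF P" using ce x(3) unfolding FF_def by blast
  show "Kc C \<inter> P = {}"
  proof (rule ccontr)
    assume "Kc C \<inter> P \<noteq> {}"
    then obtain c where c: "c \<in> Kc C" "c \<in> P" by blast
    then have "cen c \<in> C" unfolding Kc_def by simp
    then have "cen c \<notin> region P" using x(2) connected_component_subset unfolding comp_def by blast
    then show False using c(2) cen_in_tile tile_region by blast
  qed
qed

lemma H6:
  assumes "C \<in> holes P" "C' \<in> holes P" "C \<noteq> C'"
  shows "Kc C \<inter> Kc C' = {}"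
  using H5(2)[OF assms(1)] H5(2)[OF assms(2)] assms(3) by blast

lemma H7:
  assumes fin: "finite P"
  shows "finite (holes P) \<and> card P + card (holes P) \<le> card (FF P)"
proof -
  have finF: "finite (FF P)" using H3[OF fin] .
  have inj: "inj_on Kc (holes P)"
  proof (rule inj_onI)
    fix C C' assume "C \<in> holes P" "C' \<in> holes P" "Kc C = Kc C'"
    then show "C = C'" using H6 H5(1) by (metis Int_absorb)
  qed
  have "Kc ` holes P \<subseteq> Pow (FF P)" using H5(3) by blast
  then have "finite (Kc ` holes P)" using finF by (meson finite_Pow_iff finite_subset)
  then have finH: "finite (holes P)" using finite_imageD inj by blast
  have finK: "\<forall>C\<in>holes P. finite (Kc C)" using H5(3) finF finite_subset by blast
  have "card (\<Union>(Kc ` holes P)) = (\<Sum>C\<in>holes P. card (Kc C))"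
    by (rule card_UN_disjoint) (use finH finK H6 in auto)
  also have "\<dots> \<ge> (\<Sum>C\<in>holes P. 1)"
    by (rule sum_mono) (use finK H5(1) in \<open>auto simp: Suc_le_eq card_gt_0_iff\<close>)
  finally have c1: "card (holes P) \<le> card (\<Union>(Kc ` holes P))" by simp
  have "P \<inter> \<Union>(Kc ` holes P) = {}" using H5(4) by blast
  then have "card (P \<union> \<Union>(Kc ` holes P)) = card P + card (\<Union>(Kc ` holes P))"
    using fin finH finK by (intro card_Un_disjoint) auto
  moreover have "P \<union> \<Union>(Kc ` holes P) \<subseteq> FF P" using H4 H5(3) by blast
  ultimately have "card P + card (\<Union>(Kc ` holes P)) \<le> card (FF P)"
    using card_mono[OF finF] by metis
  then show ?thesis using c1 finH by simp
qed



lemma finite_bd: "finite X \<Longrightarrow> finite (bd X)"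
proof -
  assume fin: "finite X"
  have "bd X \<subseteq> Sigma X nbrs" unfolding bd_def by (auto simp: adj_nbrs)
  moreover have "finite (Sigma X nbrs)" using fin finite_nbrs by simp
  ultimately show ?thesis using finite_subset by blast
qed

lemma H8: "bd (FF P) \<subseteq> bd P"
proof
  fix p assume p: "p \<in> bd (FF P)"
  obtain a b where ab: "p = (a, b)" by (cases p)
  have h: "a \<in> FF P" "b \<notin> FF P" "adj a b" using p ab unfolding bd_def by auto
  have bP: "b \<notin> P" using h(2) H4 by blast
  have aP: "a \<in> P"
  proof (rule ccontr)
    assume "a \<notin> P"
    then have "comp P (cen a) = comp P (cen b)" using H2 h(3) bP by blast
    then show False using h(1,2) unfolding FF_def by simp
  qed
  show "p \<in> bd P" using aP bP h(3) ab unfolding bd_def by simp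
qed

definition QQ :: "(int \<times> int) set \<Rightarrow> (real \<times> real) set \<Rightarrow> ((int \<times> int) \<times> (int \<times> int)) set" where
  "QQ P C = {(a, b). a \<in> P \<and> b \<in> Kc C \<and> adj a b}"

lemma H9:
  assumes fin: "finite P" and C: "C \<in> holes P"
  shows "QQ P C \<subseteq> bd P" "4 \<le> card (QQ P C)"
proof -
  show sub: "QQ P C \<subseteq> bd P" unfolding QQ_def bd_def using H5(4)[OF C] by blast
  have finQ: "finite (QQ P C)" using finite_subset[OF sub finite_bd[OF fin]] .
  define K where "K = Kc C"
  have finK: "finite K" using H5(3)[OF C] H3[OF fin] finite_subset unfolding K_def by blast
  have neK: "K \<noteq> {}" using H5(1)[OF C] unfolding K_def .
  have img: "prod.swap ` bd K \<subseteq> QQ P C"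
  proof
    fix q assume "q \<in> prod.swap ` bd K"
    then obtain a b where ab: "q = (b, a)" "a \<in> K" "b \<notin> K" "adj a b" unfolding bd_def by auto
    have bP: "b \<in> P"
    proof (rule ccontr)
      assume nb: "b \<notin> P"
      have aP: "a \<notin> P" using ab(2) H5(4)[OF C] unfolding K_def by blast
      have "comp P (cen b) = C" using H2[OF ab(4) aP nb] H5(2)[OF C] ab(2) unfolding K_def by simp
      moreover have "cen b \<in> comp P (cen b)" unfolding comp_def
        using oint_region[OF nb cen_oint] by (simp add: connected_component_refl_eq)
      ultimately show False using ab(3) unfolding K_def Kc_def by simp
    qed
    show "q \<in> QQ P C" using ab bP adj_sym unfolding QQ_def K_def by simp
  qed
  have "card (prod.swap ` bd K) = card (bd K)" by (rule card_image) (auto simp: inj_on_def)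
  moreover have "card (fst ` K) \<ge> 1" "card (snd ` K) \<ge> 1" using finK neK
    by (simp_all add: Suc_le_eq card_gt_0_iff)
  moreover have "2 * card (fst ` K) + 2 * card (snd ` K) \<le> card (bd K)" by (rule iso_count[OF finK neK])
  moreover have "card (prod.swap ` bd K) \<le> card (QQ P C)" using card_mono[OF finQ img] .
  ultimately show "4 \<le> card (QQ P C)" by linarith
qed

lemma H10:
  assumes fin: "finite P"
  shows "card (bd (FF P)) + 4 * card (holes P) \<le> card (bd P)"
proof -
  have finH: "finite (holes P)" using H7[OF fin] by blast
  have finB: "finite (bd P)" using finite_bd[OF fin] .
  have finQ: "\<forall>C\<in>holes P. finite (QQ P C)" using H9(1)[OF fin] finite_subset finB by blast
  have disj: "\<forall>C\<in>holes P. \<forall>C'\<in>holes P. C \<noteq> C' \<longrightarrow> QQ P C \<inter> QQ P C' = {}"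
    using H6 unfolding QQ_def by blast
  have "card (\<Union>(QQ P ` holes P)) = (\<Sum>C\<in>holes P. card (QQ P C))"
    by (rule card_UN_disjoint[OF finH finQ disj])
  also have "\<dots> \<ge> (\<Sum>C\<in>holes P. 4)" by (rule sum_mono) (use H9(2)[OF fin] in blast)
  finally have c1: "4 * card (holes P) \<le> card (\<Union>(QQ P ` holes P))" by simp
  have d: "bd (FF P) \<inter> \<Union>(QQ P ` holes P) = {}"
    using H5(3) unfolding QQ_def bd_def by blast
  have s: "bd (FF P) \<union> \<Union>(QQ P ` holes P) \<subseteq> bd P" using H8 H9(1)[OF fin] by blast
  have "card (bd (FF P) \<union> \<Union>(QQ P ` holes P)) = card (bd (FF P)) + card (\<Union>(QQ P ` holes P))"
    by (rule card_Un_disjoint) (use finite_subset[OF s finB] d in auto)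
  moreover have "card (bd (FF P) \<union> \<Union>(QQ P ` holes P)) \<le> card (bd P)" using card_mono[OF finB s] .
  ultimately show ?thesis using c1 by linarith
qed

lemma main_ineq:
  assumes poly: "is_polyomino P"
  shows "4 * int (num_holes P) + 2 * \<lceil>2 * sqrt (real (card P + num_holes P))\<rceil> \<le> 2 * int (card P) + 2"
proof -
  have fin: "finite P" and ne: "P \<noteq> {}" using poly unfolding is_polyomino_def by auto
  have finF: "finite (FF P)" using H3[OF fin] .
  have neF: "FF P \<noteq> {}" using H4 ne by blast
  have m: "card P + num_holes P \<le> card (FF P)" using H7[OF fin] unfolding num_holes_def by simp
  have "2 * \<lceil>2 * sqrt (real (card P + num_holes P))\<rceil> \<le> int (card (bd (FF P)))"
    by (rule iso_final[OF finF neF m])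
  moreover have "card (bd (FF P)) + 4 * num_holes P \<le> card (bd P)" using H10[OF fin] unfolding num_holes_def .
  moreover have "card (bd P) \<le> 2 * card P + 2" using bd_upper[OF poly] .
  ultimately show ?thesis by linarith
qed

lemma part1:
  assumes "M n h < real h"
  shows "\<not> (\<exists>P. is_polyomino P \<and> card P = n \<and> num_holes P = h)"
proof
  assume "\<exists>P. is_polyomino P \<and> card P = n \<and> num_holes P = h"
  then obtain P where P: "is_polyomino P" "card P = n" "num_holes P = h" by blast
  have "4 * int h + 2 * \<lceil>2 * sqrt (real (n + h))\<rceil> \<le> 2 * int n + 2" using main_ineq[OF P(1)] P(2,3) by simp
  then have "4 * real h + 2 * real_of_int \<lceil>2 * sqrt (real (n + h))\<rceil> \<le> 2 * real n + 2"
    by (metis (mono_tags, opaque_lifting) of_int_add of_int_le_iff of_int_mult of_int_numeral of_int_of_nat_eq)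
  then have "real h \<le> M n h" unfolding M_def by simp
  then show False using assms by simp
qed



lemma tile_conn_piece:
  assumes "c \<in> P"
  shows "connected (interior (region P) \<inter> tile c)" "cen c \<in> interior (region P) \<inter> tile c"
proof -
  have "connected (oint c)" by (rule convex_connected[OF convex_oint])
  moreover have "oint c \<subseteq> interior (region P) \<inter> tile c" using oint_interior[OF assms] oint_sub_tile by blast
  moreover have "interior (region P) \<inter> tile c \<subseteq> closure (oint c)" using closure_oint by blast
  ultimately show "connected (interior (region P) \<inter> tile c)" by (rule connected_intermediate_closure)
  show "cen c \<in> interior (region P) \<inter> tile c" using oint_interior[OF assms] oint_sub_tile cen_oint by blast
qed

lemma conn_interior:
  assumes fin: "finite P" and r: "r \<in> P" and conn: "\<And>b. b \<in> P \<Longrightarrow> (r, b) \<in> (EP P)\<^sup>*"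
  shows "connected (interior (region P))"
proof -
  define U where "U = interior (region P)"
  have L: "\<exists>K. connected K \<and> K \<subseteq> U \<and> cen r \<in> K \<and> U \<inter> tile c \<subseteq> K" if "(r, c) \<in> (EP P)\<^sup>*" for c
    using that
  proof (induction rule: rtrancl_induct)
    case base
    then show ?case using tile_conn_piece[OF r] unfolding U_def by blast
  next
    case (step c d)
    then obtain K where K: "connected K" "K \<subseteq> U" "cen r \<in> K" "U \<inter> tile c \<subseteq> K" by blast
    have cd: "c \<in> P" "d \<in> P" "adj c d" using step(2) unfolding EP_def by auto
    obtain T where T: "connected T" "open T" "cen c \<in> T" "cen d \<in> T" "T \<subseteq> tile c \<union> tile d"
      using link[OF cd(3)] by blast
    have "tile c \<union> tile d \<subseteq> region P" using tile_region cd by blast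
    then have TU: "T \<subseteq> U" unfolding U_def using T(2,5)
      by (intro interior_maximal) auto
    have cK: "cen c \<in> K" using tile_conn_piece[OF cd(1)] K(4) unfolding U_def by blast
    have c1: "connected (K \<union> T)" using K(1) T(1) cK T(3) by (intro connected_Un) auto
    have c2: "connected (K \<union> T \<union> (U \<inter> tile d))"
      using tile_conn_piece[OF cd(2)] T(4) unfolding U_def by (intro connected_Un[OF c1]) auto
    show ?case using c2 K TU by (intro exI[of _ "K \<union> T \<union> (U \<inter> tile d)"]) auto
  qed
  have all: "connected_component U (cen r) x" if x: "x \<in> U" for x
  proof -
    have "x \<in> region P" using x interior_subset unfolding U_def by blast
    then obtain c where c: "c \<in> P" "x \<in> tile c" by (auto simp: region_iff)
    obtain K where K: "connected K" "K \<subseteq> U" "cen r \<in> K" "U \<inter> tile c \<subseteq> K" using L[OF conn[OF c(1)]] by blast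
    show ?thesis unfolding connected_component_def using K c x by blast
  qed
  show ?thesis unfolding U_def[symmetric] connected_iff_connected_component
    using all connected_component_sym connected_component_trans by metis
qed

definition PP :: "nat \<Rightarrow> (int \<times> int) set" where
  "PP h = {(i, j). 0 \<le> i \<and> i \<le> 2 * int h \<and> 0 \<le> j \<and> j \<le> 2 \<and> \<not> (j = 1 \<and> odd i)}"

definition hc :: "nat \<Rightarrow> int \<times> int" where
  "hc k = (2 * int k + 1, 1)"

lemma PP_finite: "finite (PP h)"
proof -
  have "PP h \<subseteq> {0..2 * int h} \<times> {0..2}" unfolding PP_def by auto
  then show ?thesis using finite_subset by blast
qed

lemma PP_row:
  assumes "j = 0 \<or> j = 2"
  shows "i \<le> 2 * h \<Longrightarrow> ((0, j), (int i, j)) \<in> (EP (PP h))\<^sup>*"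
proof (induction i)
  case 0 then show ?case by simp
next
  case (Suc i)
  then have "((0, j), (int i, j)) \<in> (EP (PP h))\<^sup>*" by simp
  moreover have "((int i, j), (int (Suc i), j)) \<in> EP (PP h)"
    using Suc.prems assms unfolding EP_def PP_def adj_def by auto
  ultimately show ?case by (rule rtrancl_into_rtrancl)
qed

lemma PP_conn:
  assumes b: "b \<in> PP h"
  shows "((0, 0), b) \<in> (EP (PP h))\<^sup>*"
proof -
  obtain i j where bij: "b = (i, j)" by (cases b)
  have ij: "0 \<le> i" "i \<le> 2 * int h" "0 \<le> j" "j \<le> 2" "\<not> (j = 1 \<and> odd i)" using b bij unfolding PP_def by auto
  have ni: "nat i \<le> 2 * h" "int (nat i) = i" using ij by auto
  have r0: "((0, 0), (i, 0)) \<in> (EP (PP h))\<^sup>*" using PP_row[of 0 "nat i" h] ni by simp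
  have e01: "((0, 0), (0, 1)) \<in> EP (PP h)" "((0, 1), (0, 2)) \<in> EP (PP h)"
    unfolding EP_def PP_def adj_def by auto
  then have r02: "((0, 0), (0, 2)) \<in> (EP (PP h))\<^sup>*" by (meson r_into_rtrancl rtrancl_into_rtrancl)
  have r2: "((0, 2), (i, 2)) \<in> (EP (PP h))\<^sup>*" using PP_row[of 2 "nat i" h] ni by simp
  consider "j = 0" | "j = 1" | "j = 2" using ij by linarith
  then show ?thesis
  proof cases
    case 1 then show ?thesis using r0 bij by simp
  next
    case 2
    have "((i, 0), (i, 1)) \<in> EP (PP h)" using ij 2 unfolding EP_def PP_def adj_def by auto
    then show ?thesis using r0 bij 2 by (simp add: rtrancl_into_rtrancl)
  next
    case 3 then show ?thesis using r02 r2 bij by (simp add: rtrancl_trans)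
  qed
qed

lemma PP_poly: "is_polyomino (PP h)"
proof -
  have r: "(0, 0) \<in> PP h" unfolding PP_def by simp
  show ?thesis unfolding is_polyomino_def
    using PP_finite conn_interior[OF PP_finite r PP_conn] r by blast
qed



lemma isolated:
  assumes cP: "c \<notin> P" and nb: "nbrs c \<subseteq> P"
  shows "comp P (cen c) \<subseteq> oint c"
proof -
  define C where "C = comp P (cen c)"
  have b: "tile c \<inter> - region P \<subseteq> oint c"
  proof
    fix x assume x: "x \<in> tile c \<inter> - region P"
    obtain x1 x2 where xx: "x = (x1, x2)" by (cases x)
    obtain c1 c2 where cc: "c = (c1, c2)" by (cases c)
    have h: "real_of_int c1 \<le> x1" "x1 \<le> real_of_int c1 + 1" "real_of_int c2 \<le> x2" "x2 \<le> real_of_int c2 + 1"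
      using x unfolding xx cc tile_def by auto
    have nr: "x \<notin> tile d" if "d \<in> nbrs c" for d using x nb that tile_region by blast
    have "x1 \<noteq> real_of_int c1 + 1" using nr[of "(c1 + 1, c2)"] h unfolding xx cc nbrs_def tile_def by auto
    moreover have "x1 \<noteq> real_of_int c1" using nr[of "(c1 - 1, c2)"] h unfolding xx cc nbrs_def tile_def by auto
    moreover have "x2 \<noteq> real_of_int c2 + 1" using nr[of "(c1, c2 + 1)"] h unfolding xx cc nbrs_def tile_def by auto
    moreover have "x2 \<noteq> real_of_int c2" using nr[of "(c1, c2 - 1)"] h unfolding xx cc nbrs_def tile_def by auto
    ultimately show "x \<in> oint c" using h unfolding xx cc oint_def by auto
  qed
  have conn: "connected C" unfolding C_def comp_def by simp
  have sub: "C \<subseteq> - region P" unfolding C_def comp_def by (rule connected_component_subset)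
  have cov: "C \<subseteq> oint c \<union> - tile c" using sub b by blast
  have dis: "oint c \<inter> - tile c \<inter> C = {}" using oint_sub_tile by blast
  have o1: "open (- tile c)" using closed_tile[of c] by (simp add: open_Compl)
  have o: "open (oint c)" "open (- tile c)" using open_oint o1 by auto
  have "cen c \<in> - region P" using oint_region[OF cP cen_oint] by simp
  then have "cen c \<in> C" unfolding C_def comp_def by (simp add: connected_component_refl_eq)
  then have "oint c \<inter> C \<noteq> {}" using cen_oint by blast
  then have "- tile c \<inter> C = {}" using connectedD[OF conn o dis cov] by blast
  then show ?thesis using cov unfolding C_def by blast
qed

lemma hc_notin: "hc k \<notin> PP h"
  unfolding hc_def PP_def by auto

lemma hc_nbrs: "k < h \<Longrightarrow> nbrs (hc k) \<subseteq> PP h"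
  unfolding hc_def PP_def nbrs_def by auto

lemma PP_cells:
  assumes "c \<notin> PP h" "0 \<le> fst c" "fst c \<le> 2 * int h" "0 \<le> snd c" "snd c \<le> 2"
  shows "\<exists>k<h. c = hc k"
proof -
  obtain i j where cc: "c = (i, j)" by (cases c)
  have j: "j = 1" "odd i" using assms cc unfolding PP_def by auto
  obtain b where b: "i = 2 * b + 1" using j(2) by (auto elim!: oddE)
  have "0 \<le> b" using b assms cc by simp
  define k where "k = nat b"
  have "i = 2 * int k + 1" using b \<open>0 \<le> b\<close> unfolding k_def by simp
  moreover have "k < h" using j assms cc \<open>i = 2 * int k + 1\<close> by auto
  ultimately show ?thesis using cc j unfolding hc_def by auto
qed

lemma PP_outer:
  assumes cP: "c \<notin> PP h" and nh: "\<forall>k<h. c \<noteq> hc k"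
  shows "\<not> bounded (comp (PP h) (cen c))"
proof
  assume bnd: "bounded (comp (PP h) (cen c))"
  define B :: "(real \<times> real) set" where "B = {0 .. 2 * real h + 1} \<times> {0 .. 3}"
  have "bounded B" unfolding B_def by (intro bounded_Times) auto
  moreover have "convex B" unfolding B_def by (intro convex_Times) auto
  ultimately have cB: "connected (- B)" by (intro connected_complement_bounded_convex) auto
  have "region (PP h) \<subseteq> B"
  proof
    fix x assume "x \<in> region (PP h)"
    then obtain d where d: "d \<in> PP h" "x \<in> tile d" by (auto simp: region_iff)
    obtain i j where dd: "d = (i, j)" by (cases d)
    have "0 \<le> i" "i \<le> 2 * int h" "0 \<le> j" "j \<le> 2" using d(1) dd unfolding PP_def by auto
    then have "0 \<le> real_of_int i" "real_of_int i \<le> 2 * real h" "0 \<le> real_of_int j" "real_of_int j \<le> 2"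
      by linarith+
    then show "x \<in> B" using d(2) dd unfolding tile_def B_def by (cases x) auto
  qed
  then have sB: "- B \<subseteq> - region (PP h)" by blast
  have "cen c \<notin> B"
  proof
    assume cB': "cen c \<in> B"
    obtain i j where cc: "c = (i, j)" by (cases c)
    have r: "0 \<le> real_of_int i + 1/2" "real_of_int i + 1/2 \<le> 2 * real h + 1"
      "0 \<le> real_of_int j + 1/2" "real_of_int j + 1/2 \<le> 3"
      using cB' cc unfolding B_def cen_def by auto
    have "0 \<le> i" "i \<le> 2 * int h" "0 \<le> j" "j \<le> 2"
    proof -
      have "real_of_int (-1) < real_of_int i" using r by simp
      then have "-1 < i" by (simp only: of_int_less_iff)
      then show "0 \<le> i" by simp
      have "real_of_int i < real_of_int (2 * int h + 1)" using r by simp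
      then have "i < 2 * int h + 1" by (simp only: of_int_less_iff)
      then show "i \<le> 2 * int h" by simp
      have "real_of_int (-1) < real_of_int j" using r by simp
      then have "-1 < j" by (simp only: of_int_less_iff)
      then show "0 \<le> j" by simp
      have "real_of_int j < real_of_int 3" using r by simp
      then have "j < 3" by (simp only: of_int_less_iff)
      then show "j \<le> 2" by simp
    qed
    then show False using PP_cells[OF cP] nh cc by auto
  qed
  then have "- B \<subseteq> comp (PP h) (cen c)" unfolding comp_def using cB sB
    by (intro connected_component_maximal) auto
  then have "bounded (- B)" using bnd bounded_subset by blast
  moreover have "bounded B" unfolding B_def by (intro bounded_Times) auto
  ultimately have "bounded (B \<union> - B)" by (simp only: bounded_Un)
  moreover have "B \<union> - B = UNIV" by blast
  ultimately show False by (metis not_bounded_UNIV)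
qed

lemma PP_holes: "holes (PP h) = (\<lambda>k. comp (PP h) (cen (hc k))) ` {..<h}"
proof
  show "holes (PP h) \<subseteq> (\<lambda>k. comp (PP h) (cen (hc k))) ` {..<h}"
  proof
    fix C assume C: "C \<in> holes (PP h)"
    obtain x where x: "x \<notin> region (PP h)" "C = comp (PP h) x" "bounded C" using hole_rep[OF C] by blast
    define c where "c = (\<lfloor>fst x\<rfloor>, \<lfloor>snd x\<rfloor>)"
    have cc: "cen c \<in> C" using H1[OF x(1)] x(2) unfolding c_def by simp
    then have Cc: "comp (PP h) (cen c) = C" using x(2) unfolding comp_def by (metis connected_component_eq)
    have "cen c \<notin> region (PP h)" using cc x(2) connected_component_subset unfolding comp_def by blast
    then have cP: "c \<notin> PP h" using cen_in_tile tile_region by blast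
    show "C \<in> (\<lambda>k. comp (PP h) (cen (hc k))) ` {..<h}"
    proof (cases "\<exists>k<h. c = hc k")
      case True then show ?thesis using Cc by auto
    next
      case False then show ?thesis using PP_outer[OF cP] Cc x(3) by auto
    qed
  qed
  show "(\<lambda>k. comp (PP h) (cen (hc k))) ` {..<h} \<subseteq> holes (PP h)"
  proof
    fix C assume "C \<in> (\<lambda>k. comp (PP h) (cen (hc k))) ` {..<h}"
    then obtain k where k: "k < h" "C = comp (PP h) (cen (hc k))" by auto
    have s: "cen (hc k) \<in> - region (PP h)" using oint_region[OF hc_notin cen_oint] by simp
    have "C \<in> components (- region (PP h))" unfolding components_iff using k s unfolding comp_def by blast
    moreover have "C \<subseteq> tile (hc k)" using isolated[OF hc_notin hc_nbrs[OF k(1)]] oint_sub_tile k(2) by blast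
    then have "bounded C" using compact_tile compact_imp_bounded bounded_subset by blast
    ultimately show "C \<in> holes (PP h)" unfolding holes_def by blast
  qed
qed

lemma PP_num_holes: "num_holes (PP h) = h"
proof -
  have "inj_on (\<lambda>k. comp (PP h) (cen (hc k))) {..<h}"
  proof (rule inj_onI)
    fix k l assume k: "k \<in> {..<h}" and l: "l \<in> {..<h}" and e: "comp (PP h) (cen (hc k)) = comp (PP h) (cen (hc l))"
    have s: "cen (hc l) \<in> - region (PP h)" using oint_region[OF hc_notin cen_oint] by simp
    have "cen (hc l) \<in> comp (PP h) (cen (hc l))" unfolding comp_def using s by (simp add: connected_component_refl_eq)
    then have "cen (hc l) \<in> oint (hc k)" using e isolated[OF hc_notin hc_nbrs] k by auto
    then have "hc l = hc k" using oint_tile cen_in_tile by metis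
    then show "k = l" unfolding hc_def by simp
  qed
  then show ?thesis unfolding num_holes_def PP_holes by (simp add: card_image)
qed


theorem lemma2:
  shows "(\<forall>n h :: nat. M n h < real h \<longrightarrow>
            \<not> (\<exists>P. is_polyomino P \<and> card P = n \<and> num_holes P = h))
         \<and> (\<forall>h :: nat. h \<ge> 1 \<longrightarrow> real h \<le> M (g h) h)"
proof (intro conjI allI impI)
  fix n h :: nat
  assume "M n h < real h"
  then show "\<not> (\<exists>P. is_polyomino P \<and> card P = n \<and> num_holes P = h)" by (rule part1)
next
  fix h :: nat
  assume "h \<ge> 1"
  have "\<exists>n P. is_polyomino P \<and> card P = n \<and> num_holes P = h"
    using PP_poly PP_num_holes by blast
  then have "\<exists>P. is_polyomino P \<and> card P = g h \<and> num_holes P = h"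
    unfolding g_def by (rule LeastI_ex)
  then obtain P where P: "is_polyomino P" "card P = g h" "num_holes P = h" by blast
  show "real h \<le> M (g h) h"
  proof (rule ccontr)
    assume "\<not> real h \<le> M (g h) h"
    then have "M (g h) h < real h" by simp
    then show False using part1[of "g h" h] P by blast
  qed
qed

end
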